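(* Let $\mathcal X$ be finite and $P_0,P_1,\hat P_0,\hat P_1$ distributions on $\mathcal X$ with full support. Consider the mismatched sequential probability ratio test with thresholds $\hat\gamma_0,\hat\gamma_1>0$: with $\hat S_n=\sum_{i=1}^n\log\frac{\hat P_0(x_i)}{\hat P_1(x_i)}$, stop at $\hat\tau=\inf\{n\ge1:\hat S_n\ge\hat\gamma_0\text{ or }\hat S_n\le-\hat\gamma_1\}$ and decide $0$ if $\hat S_{\hat\tau}\ge\hat\gamma_0$ and $1$ if $\hat S_{\hat\tau}\le-\hat\gamma_1$; let $\hat\epsilon_0$ (resp. $\hat\epsilon_1$) be the probability of deciding $1$ (resp. $0$) under i.i.d. $P_0$ (resp. $P_1$) observations. If $D(P_0\|\hat P_1)-D(P_0\|\hat P_0)<0$, then $\hat\epsilon_0\to1$ as $\hat\gamma_0,\hat\gamma_1\to\infty$. Similarly, if $D(P_1\|\hat P_0)-D(P_1\|\hat P_1)<0$, then $\hat\epsilon_1\to1$ as $\hat\gamma_0,\hat\gamma_1\to\infty$.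
   Context: $D$ is relative entropy; $P_0,P_1$ are the true distributions and $\hat P_0,\hat P_1$ those used in the test. *)

theory Defs
  imports "HOL-Probability.Probability"
begin

definition rel_entropy :: "'a::finite pmf \<Rightarrow> 'a pmf \<Rightarrow> real" where
  "rel_entropy P Q = (\<Sum>x\<in>UNIV. pmf P x * ln (pmf P x / pmf Q x))"

text \<open>Mismatched log-likelihood ratio statistic: S_n = sum_{i=1}^n log (Q0 x_i / Q1 x_i),
  where the observations x_1, x_2, ... are the stream elements w!!0, w!!1, ...\<close>
definition llr_sum :: "'a pmf \<Rightarrow> 'a pmf \<Rightarrow> 'a stream \<Rightarrow> nat \<Rightarrow> real" where
  "llr_sum Q0 Q1 w n = (\<Sum>i<n. ln (pmf Q0 (w !! i) / pmf Q1 (w !! i)))"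

definition sprt_decides1 :: "'a pmf \<Rightarrow> 'a pmf \<Rightarrow> real \<Rightarrow> real \<Rightarrow> 'a stream \<Rightarrow> bool" where
  "sprt_decides1 Q0 Q1 g0 g1 w =
     (\<exists>n\<ge>1. llr_sum Q0 Q1 w n \<le> - g1 \<and>
        (\<forall>m\<in>{1..<n}. - g1 < llr_sum Q0 Q1 w m \<and> llr_sum Q0 Q1 w m < g0))"

definition sprt_decides0 :: "'a pmf \<Rightarrow> 'a pmf \<Rightarrow> real \<Rightarrow> real \<Rightarrow> 'a stream \<Rightarrow> bool" where
  "sprt_decides0 Q0 Q1 g0 g1 w =
     (\<exists>n\<ge>1. llr_sum Q0 Q1 w n \<ge> g0 \<and>
        (\<forall>m\<in>{1..<n}. - g1 < llr_sum Q0 Q1 w m \<and> llr_sum Q0 Q1 w m < g0))"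

definition sprt_eps0 :: "'a pmf \<Rightarrow> 'a pmf \<Rightarrow> 'a pmf \<Rightarrow> real \<Rightarrow> real \<Rightarrow> real" where
  "sprt_eps0 P0 Q0 Q1 g0 g1 =
     measure (stream_space (measure_pmf P0))
       {w \<in> space (stream_space (measure_pmf P0)). sprt_decides1 Q0 Q1 g0 g1 w}"

definition sprt_eps1 :: "'a pmf \<Rightarrow> 'a pmf \<Rightarrow> 'a pmf \<Rightarrow> real \<Rightarrow> real \<Rightarrow> real" where
  "sprt_eps1 P1 Q0 Q1 g0 g1 =
     measure (stream_space (measure_pmf P1))
       {w \<in> space (stream_space (measure_pmf P1)). sprt_decides0 Q0 Q1 g0 g1 w}"

end

theory Submission
  imports Defs
begin

definition lx :: "'a pmf \<Rightarrow> 'a pmf \<Rightarrow> 'a \<Rightarrow> real" where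
  "lx Q0 Q1 x = ln (pmf Q0 x / pmf Q1 x)"

definition mgf :: "'a::finite pmf \<Rightarrow> 'a pmf \<Rightarrow> 'a pmf \<Rightarrow> real \<Rightarrow> real" where
  "mgf P Q0 Q1 t = (\<Sum>x\<in>UNIV. pmf P x * exp (t * lx Q0 Q1 x))"

lemma snth_fun_meas[measurable]:
  "(\<lambda>w. f (w !! i)) \<in> borel_measurable (stream_space (measure_pmf P))"
  by (rule measurable_compose[OF measurable_snth]) simp

lemma llr_meas[measurable]:
  "(\<lambda>w. llr_sum Q0 Q1 w n) \<in> borel_measurable (stream_space (measure_pmf P))"
  unfolding llr_sum_def by (intro borel_measurable_sum) simp

lemma nn_prod_stream:
  fixes g :: "'a \<Rightarrow> ennreal"
  shows "(\<integral>\<^sup>+w. (\<Prod>i<n. g (w !! i)) \<partial>stream_space (measure_pmf P)) = (\<integral>\<^sup>+x. g x \<partial>measure_pmf P) ^ n"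
proof (induction n)
  case 0
  interpret S: prob_space "stream_space (measure_pmf P)"
    by (rule prob_space.prob_space_stream_space[OF prob_space_measure_pmf])
  show ?case by (simp add: S.emeasure_space_1)
next
  case (Suc n)
  have "(\<integral>\<^sup>+w. (\<Prod>i<Suc n. g (w !! i)) \<partial>stream_space (measure_pmf P))
     = (\<integral>\<^sup>+x. (\<integral>\<^sup>+X. (\<Prod>i<Suc n. g ((x ## X) !! i)) \<partial>stream_space (measure_pmf P)) \<partial>measure_pmf P)"
    by (rule prob_space.nn_integral_stream_space[OF prob_space_measure_pmf]) measurable
  also have "\<dots> = (\<integral>\<^sup>+x. g x * (\<integral>\<^sup>+X. (\<Prod>i<n. g (X !! i)) \<partial>stream_space (measure_pmf P)) \<partial>measure_pmf P)"
  proof -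
    have e: "(\<Prod>i<Suc n. g ((x ## X) !! i)) = g x * (\<Prod>i<n. g (X !! i))" for x X
      by (simp only: prod.lessThan_Suc_shift) simp
    show ?thesis unfolding e by (subst nn_integral_cmult) auto
  qed
  also have "\<dots> = (\<integral>\<^sup>+x. g x \<partial>measure_pmf P) ^ Suc n"
    using Suc by (simp add: nn_integral_multc mult.commute)
  finally show ?case .
qed

lemma exp_llr:
  "exp (t * llr_sum Q0 Q1 w n) = (\<Prod>i<n. exp (t * lx Q0 Q1 (w !! i)))"
  unfolding llr_sum_def lx_def by (simp add: sum_distrib_left exp_sum)

lemma mgf_integral:
  "(\<integral>\<^sup>+w. ennreal (exp (t * llr_sum Q0 Q1 w n)) \<partial>stream_space (measure_pmf P)) = ennreal (mgf P Q0 Q1 t) ^ n"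
proof -
  have "(\<integral>\<^sup>+w. ennreal (exp (t * llr_sum Q0 Q1 w n)) \<partial>stream_space (measure_pmf P))
    = (\<integral>\<^sup>+w. (\<Prod>i<n. ennreal (exp (t * lx Q0 Q1 (w !! i)))) \<partial>stream_space (measure_pmf P))"
    by (simp add: exp_llr prod_ennreal)
  also have "\<dots> = (\<integral>\<^sup>+x. ennreal (exp (t * lx Q0 Q1 x)) \<partial>measure_pmf P) ^ n"
    by (rule nn_prod_stream)
  also have "(\<integral>\<^sup>+x. ennreal (exp (t * lx Q0 Q1 x)) \<partial>measure_pmf P) = ennreal (mgf P Q0 Q1 t)"
    unfolding mgf_def
    by (subst nn_integral_measure_pmf_support[where A=UNIV])
       (auto simp: ennreal_mult[symmetric] mult.commute intro!: sum.cong)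
  finally show ?thesis .
qed

lemma mgf_deriv:
  "DERIV (mgf P Q0 Q1) 0 :> (\<Sum>x\<in>UNIV. pmf P x * lx Q0 Q1 x)"
proof -
  have "DERIV (\<lambda>t. \<Sum>x\<in>UNIV. pmf P x * exp (t * lx Q0 Q1 x)) 0 :> (\<Sum>x\<in>UNIV. pmf P x * (exp (0 * lx Q0 Q1 x) * lx Q0 Q1 x))"
    by (intro DERIV_sum DERIV_cmult DERIV_fun_exp) (auto intro!: derivative_eq_intros)
  then show ?thesis unfolding mgf_def by simp
qed

lemma exists_theta:
  assumes "(\<Sum>x\<in>UNIV. pmf P x * lx Q0 Q1 x) < 0"
  shows "\<exists>t>0. mgf P Q0 Q1 t < 1"
proof -
  have m0: "mgf P Q0 Q1 0 = 1" unfolding mgf_def by (simp add: sum_pmf_eq_1)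
  from DERIV_neg_dec_right[OF mgf_deriv assms] obtain d where "d > 0" "\<forall>h>0. h < d \<longrightarrow> mgf P Q0 Q1 (0 + h) < mgf P Q0 Q1 0"
    by blast
  then show ?thesis using m0 by (intro exI[of _ "d/2"]) auto
qed

lemma mgf_nonneg: "mgf P Q0 Q1 t \<ge> 0"
  unfolding mgf_def by (auto intro!: sum_nonneg)

lemma tail_bound:
  assumes "t \<ge> 0"
  shows "measure (stream_space (measure_pmf P)) {w \<in> space (stream_space (measure_pmf P)). c \<le> llr_sum Q0 Q1 w n}
     \<le> exp (- t * c) * mgf P Q0 Q1 t ^ n"
proof -
  let ?S = "stream_space (measure_pmf P)"
  interpret S: prob_space ?S
    by (rule prob_space.prob_space_stream_space[OF prob_space_measure_pmf])
  let ?A = "{w \<in> space ?S. c \<le> llr_sum Q0 Q1 w n}"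
  have A: "?A \<in> sets ?S" by measurable
  have "emeasure ?S ?A = (\<integral>\<^sup>+w. indicator ?A w \<partial>?S)" using A by simp
  also have "\<dots> \<le> (\<integral>\<^sup>+w. ennreal (exp (- t * c)) * ennreal (exp (t * llr_sum Q0 Q1 w n)) \<partial>?S)"
  proof (intro nn_integral_mono)
    fix w assume "w \<in> space ?S"
    have "c \<le> llr_sum Q0 Q1 w n \<Longrightarrow> 1 \<le> exp (- t * c) * exp (t * llr_sum Q0 Q1 w n)"
      using assms by (simp add: exp_add[symmetric] mult.commute[of c] mult_left_mono)
    then show "indicator ?A w \<le> ennreal (exp (- t * c)) * ennreal (exp (t * llr_sum Q0 Q1 w n))"
      by (auto split: split_indicator simp: ennreal_mult[symmetric])
  qed
  also have "\<dots> = ennreal (exp (- t * c)) * ennreal (mgf P Q0 Q1 t) ^ n"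
    by (subst nn_integral_cmult) (auto simp: mgf_integral)
  also have "\<dots> = ennreal (exp (- t * c) * mgf P Q0 Q1 t ^ n)"
    by (simp add: ennreal_mult ennreal_power mgf_nonneg)
  finally show ?thesis
    by (simp add: S.emeasure_eq_measure mgf_nonneg)
qed

lemma eps0_bound:
  fixes P Q0 Q1 :: "'a::finite pmf"
  assumes E: "(\<Sum>x\<in>UNIV. pmf P x * lx Q0 Q1 x) < 0"
  shows "\<exists>B. (B \<longlongrightarrow> 0) at_top \<and> (\<forall>g0 g1. 1 - B g0 \<le> sprt_eps0 P Q0 Q1 g0 g1)"
proof -
  let ?S = "stream_space (measure_pmf P)"
  interpret S: prob_space ?S
    by (rule prob_space.prob_space_stream_space[OF prob_space_measure_pmf])
  obtain t where t: "t > 0" "mgf P Q0 Q1 t < 1" using exists_theta[OF E] by blast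
  define m where "m = mgf P Q0 Q1 t"
  have m: "0 \<le> m" "m < 1" using t mgf_nonneg unfolding m_def by auto
  define B where "B g0 = exp (- t * g0) / (1 - m)" for g0
  have "((\<lambda>g0. exp (- t * g0)) \<longlongrightarrow> 0) at_top"
  proof -
    have "LIM x at_top. (- t) * x :> at_bot"
      using t by (intro filterlim_tendsto_neg_mult_at_bot[OF tendsto_const _ filterlim_ident]) auto
    then show ?thesis
      using filterlim_compose[OF exp_at_bot] by simp
  qed
  then have "(B \<longlongrightarrow> 0) at_top"
    unfolding B_def by (rule tendsto_divide_zero)
  moreover have "1 - B g0 \<le> sprt_eps0 P Q0 Q1 g0 g1" for g0 g1
  proof -
    define Bad1 where "Bad1 = (\<Union>n. {w \<in> space ?S. g0 \<le> llr_sum Q0 Q1 w n})"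
    define Bad2 where "Bad2 = {w \<in> space ?S. \<forall>n\<ge>1. - g1 < llr_sum Q0 Q1 w n}"
    define D where "D = {w \<in> space ?S. sprt_decides1 Q0 Q1 g0 g1 w}"
    have [measurable]: "Bad1 \<in> sets ?S" "Bad2 \<in> sets ?S" "D \<in> sets ?S"
      unfolding Bad1_def Bad2_def D_def sprt_decides1_def by measurable
    have "emeasure ?S Bad1 \<le> (\<Sum>n. emeasure ?S {w \<in> space ?S. g0 \<le> llr_sum Q0 Q1 w n})"
      unfolding Bad1_def by (rule emeasure_subadditive_countably) auto
    also have "\<dots> \<le> (\<Sum>n. ennreal (exp (- t * g0) * m ^ n))"
      using tail_bound[OF less_imp_le[OF t(1)], of P g0 Q0 Q1]
      by (intro suminf_le) (auto simp: S.emeasure_eq_measure m_def intro!: ennreal_leI)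
    also have "\<dots> = ennreal (B g0)"
    proof (rule suminf_ennreal_eq)
      show "(\<lambda>n. exp (- t * g0) * m ^ n) sums B g0"
        unfolding B_def using geometric_sums[of m] m
        by (auto intro: sums_mult simp: divide_inverse)
    qed (use m in auto)
    finally have b1: "measure ?S Bad1 \<le> B g0"
      using m by (simp add: S.emeasure_eq_measure B_def)
    have b2n: "measure ?S Bad2 \<le> exp (t * g1) * m ^ Suc n" for n
    proof -
      have "measure ?S Bad2 \<le> measure ?S {w \<in> space ?S. - g1 \<le> llr_sum Q0 Q1 w (Suc n)}"
        by (rule S.finite_measure_mono) (auto simp: Bad2_def less_imp_le)
      also have "\<dots> \<le> exp (t * g1) * m ^ Suc n"
        using tail_bound[OF less_imp_le[OF t(1)], of P "- g1" Q0 Q1 "Suc n"] by (simp add: m_def)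
      finally show ?thesis .
    qed
    have "(\<lambda>n. exp (t * g1) * m ^ Suc n) \<longlonglongrightarrow> 0"
      using m by (intro tendsto_mult_right_zero LIMSEQ_power_zero[THEN LIMSEQ_Suc]) auto
    then have b2: "measure ?S Bad2 \<le> 0"
      using b2n by (intro LIMSEQ_le_const[where X="\<lambda>n. exp (t * g1) * m ^ Suc n"]) auto
    have sub: "space ?S \<subseteq> D \<union> Bad1 \<union> Bad2"
    proof
      fix w assume w: "w \<in> space ?S"
      show "w \<in> D \<union> Bad1 \<union> Bad2"
      proof (cases "w \<in> Bad1 \<or> w \<in> Bad2")
        case False
        then have lt: "\<forall>n. llr_sum Q0 Q1 w n < g0" and ex: "\<exists>n. n \<ge> 1 \<and> llr_sum Q0 Q1 w n \<le> - g1"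
          using w by (auto simp: Bad1_def Bad2_def not_le not_less)
        obtain n where n: "n \<ge> 1 \<and> llr_sum Q0 Q1 w n \<le> - g1"
          and least: "\<forall>k<n. \<not> (k \<ge> 1 \<and> llr_sum Q0 Q1 w k \<le> - g1)"
          using ex exists_least_iff[of "\<lambda>n. n \<ge> 1 \<and> llr_sum Q0 Q1 w n \<le> - g1"] by blast
        have "sprt_decides1 Q0 Q1 g0 g1 w"
          unfolding sprt_decides1_def using n least lt
          by (intro exI[of _ n]) (auto simp: not_le)
        then show ?thesis using w by (auto simp: D_def)
      qed auto
    qed
    have "1 \<le> measure ?S (D \<union> Bad1 \<union> Bad2)"
      using S.finite_measure_mono[OF sub] by (simp add: S.prob_space)
    also have "\<dots> \<le> measure ?S D + measure ?S Bad1 + measure ?S Bad2"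
      using measure_Un_le[of "D \<union> Bad1" ?S Bad2] measure_Un_le[of D ?S Bad1]
      by auto
    finally have "1 - B g0 \<le> measure ?S D" using b1 b2 by linarith
    then show ?thesis unfolding sprt_eps0_def D_def .
  qed
  ultimately show ?thesis by blast
qed

lemma ln_div_aux:
  fixes p a b :: real
  assumes "p > 0" "a > 0" "b > 0"
  shows "p * ln (p / b) - p * ln (p / a) = p * ln (a / b)"
proof -
  have e: "ln (p / b) = ln p - ln b" "ln (p / a) = ln p - ln a" "ln (a / b) = ln a - ln b"
    using assms by (simp_all add: ln_div)
  show ?thesis unfolding e by (simp add: algebra_simps)
qed

lemma E_eq:
  fixes P Q0 Q1 :: "'a::finite pmf"
  assumes "set_pmf P = UNIV" "set_pmf Q0 = UNIV" "set_pmf Q1 = UNIV"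
  shows "rel_entropy P Q1 - rel_entropy P Q0 = (\<Sum>x\<in>UNIV. pmf P x * lx Q0 Q1 x)"
proof -
  have pos: "pmf R x > 0" if "set_pmf R = UNIV" for R :: "'a pmf" and x
    using that by (metis UNIV_I pmf_positive)
  show ?thesis
    unfolding rel_entropy_def lx_def sum_subtractf[symmetric]
    using pos[OF assms(1)] pos[OF assms(2)] pos[OF assms(3)]
    by (intro sum.cong refl) (simp add: ln_div_aux)
qed

lemma llr_swap:
  assumes "set_pmf Q0 = UNIV" "set_pmf Q1 = UNIV"
  shows "llr_sum Q1 Q0 w n = - llr_sum Q0 Q1 w n"
proof -
  have pos: "pmf R x > 0" if "set_pmf R = UNIV" for R :: "'a pmf" and x
    using that by (metis UNIV_I pmf_positive)
  show ?thesis
    unfolding llr_sum_def sum_negf[symmetric]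
    using pos[OF assms(1)] pos[OF assms(2)]
    by (intro sum.cong refl) (simp add: ln_div)
qed

lemma eps_swap:
  assumes "set_pmf Q0 = UNIV" "set_pmf Q1 = UNIV"
  shows "sprt_eps1 P Q0 Q1 g0 g1 = sprt_eps0 P Q1 Q0 g1 g0"
proof -
  have "sprt_decides0 Q0 Q1 g0 g1 w = sprt_decides1 Q1 Q0 g1 g0 w" for w
  proof -
    have e: "(- g0 < - S \<and> - S < g1) \<longleftrightarrow> (- g1 < S \<and> S < g0)" for S :: real by auto
    have e2: "(- S \<le> - g0) \<longleftrightarrow> (g0 \<le> S)" for S :: real by auto
    show ?thesis unfolding sprt_decides0_def sprt_decides1_def llr_swap[OF assms] e e2 by simp
  qed
  then show ?thesis unfolding sprt_eps0_def sprt_eps1_def by simp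
qed

lemma lim_aux:
  fixes f :: "real \<Rightarrow> real \<Rightarrow> real" and B :: "real \<Rightarrow> real"
  assumes B: "(B \<longlongrightarrow> 0) at_top" and lo: "\<And>a b. 1 - B (h (a, b)) \<le> f a b"
    and up: "\<And>a b. f a b \<le> 1"
    and h: "filterlim h at_top (at_top \<times>\<^sub>F at_top)"
  shows "((\<lambda>(a, b). f a b) \<longlongrightarrow> 1) (at_top \<times>\<^sub>F at_top)"
proof (rule tendsto_sandwich[where f="\<lambda>p. 1 - B (h p)" and h="\<lambda>p. 1"])
  have "((\<lambda>p. B (h p)) \<longlongrightarrow> 0) (at_top \<times>\<^sub>F at_top)"
    using filterlim_compose[OF B h] .
  then show "((\<lambda>p. 1 - B (h p)) \<longlongrightarrow> 1) (at_top \<times>\<^sub>F at_top)"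
    using tendsto_diff[OF tendsto_const, of "\<lambda>p. B (h p)" 0 _ 1] by simp
qed (use lo up in \<open>auto intro!: always_eventually split: prod.split\<close>)

theorem theorem7:
  fixes P0 P1 P0h P1h :: "'a::finite pmf"
  assumes "set_pmf P0 = UNIV" and "set_pmf P1 = UNIV"
      and "set_pmf P0h = UNIV" and "set_pmf P1h = UNIV"
  shows "(rel_entropy P0 P1h - rel_entropy P0 P0h < 0 \<longrightarrow>
            ((\<lambda>(g0, g1). sprt_eps0 P0 P0h P1h g0 g1) \<longlongrightarrow> 1) (at_top \<times>\<^sub>F at_top))
       \<and> (rel_entropy P1 P0h - rel_entropy P1 P1h < 0 \<longrightarrow>
            ((\<lambda>(g0, g1). sprt_eps1 P1 P0h P1h g0 g1) \<longlongrightarrow> 1) (at_top \<times>\<^sub>F at_top))"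
proof (intro conjI impI)
  assume "rel_entropy P0 P1h - rel_entropy P0 P0h < 0"
  then have "(\<Sum>x\<in>UNIV. pmf P0 x * lx P0h P1h x) < 0"
    using E_eq[OF assms(1,3,4)] by simp
  from eps0_bound[OF this] obtain B where B: "(B \<longlongrightarrow> 0) at_top"
    and lo: "\<And>g0 g1. 1 - B g0 \<le> sprt_eps0 P0 P0h P1h g0 g1" by blast
  interpret S: prob_space "stream_space (measure_pmf P0)"
    by (rule prob_space.prob_space_stream_space[OF prob_space_measure_pmf])
  show "((\<lambda>(g0, g1). sprt_eps0 P0 P0h P1h g0 g1) \<longlongrightarrow> 1) (at_top \<times>\<^sub>F at_top)"
  proof (rule lim_aux[OF B, where h=fst])
    show "sprt_eps0 P0 P0h P1h a b \<le> 1" for a b unfolding sprt_eps0_def by (rule S.prob_le_1)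
  qed (auto intro: lo simp: filterlim_fst)
next
  assume "rel_entropy P1 P0h - rel_entropy P1 P1h < 0"
  then have "(\<Sum>x\<in>UNIV. pmf P1 x * lx P1h P0h x) < 0"
    using E_eq[OF assms(2,4,3)] by simp
  from eps0_bound[OF this] obtain B where B: "(B \<longlongrightarrow> 0) at_top"
    and lo: "\<And>g0 g1. 1 - B g0 \<le> sprt_eps0 P1 P1h P0h g0 g1" by blast
  interpret S: prob_space "stream_space (measure_pmf P1)"
    by (rule prob_space.prob_space_stream_space[OF prob_space_measure_pmf])
  show "((\<lambda>(g0, g1). sprt_eps1 P1 P0h P1h g0 g1) \<longlongrightarrow> 1) (at_top \<times>\<^sub>F at_top)"
  proof (rule lim_aux[OF B, where h=snd])
    show "sprt_eps1 P1 P0h P1h a b \<le> 1" for a b unfolding sprt_eps1_def by (rule S.prob_le_1)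
  qed (auto intro: lo simp: eps_swap[OF assms(3,4)] filterlim_snd)
qed

end
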